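(* Let $G\leq\operatorname{Homeo}(\mathfrak{C})$ be a vigorous group generated by its elements of small support. Suppose $B,C,D\in K_{\mathfrak{C}}$ are pairwise disjoint and $B\cup C\cup D=\mathfrak{C}$. Then $G=\langle \operatorname{pstab}_G(C)\cup\operatorname{pstab}_G(D)\rangle$.
   Context: $\mathfrak{C}$ denotes a Cantor space (a space homeomorphic to $\{0,1\}^\omega$). Groups of homeomorphisms act on the right. $K_{\mathfrak{C}}$ denotes the set of non-empty proper clopen subsets of $\mathfrak{C}$. For $\gamma\in\operatorname{Homeo}(\mathfrak{C})$, $\operatorname{supp}(\gamma)=\{p\in\mathfrak{C}: p\gamma\neq p\}$. For $G\le\operatorname{Homeo}(\mathfrak{C})$ and $A\subseteq\mathfrak{C}$, $\operatorname{pstab}_G(A)=\{g\in G: pg=p \text{ for all } p\in A\}$. A subset $S\subseteq \operatorname{Homeo}(\mathfrak{C})$ is vigorous if for all clopen $A,B,C\subseteq\mathfrak{C}$ with $B,C$ non-empty proper subsets of $A$ there is $\gamma\in S$ with $\operatorname{supp}(\gamma)\subseteq A$ and $B\gamma\subseteq C$. $G$ is generated by its elements of small support if $G$ is generated by $\{\gamma\in G: \operatorname{supp}(\gamma)\subseteq A \text{ for some } A\in K_{\mathfrak{C}}\}$. *)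

theory Defs
  imports "HOL-Analysis.Analysis"
begin

definition cantor_top :: "(nat \<Rightarrow> bool) topology" where
  "cantor_top = product_topology (\<lambda>_. discrete_topology UNIV) UNIV"

text \<open>Homeomorphisms of a space whose carrier is the whole type.\<close>
definition Homeo :: "'a topology \<Rightarrow> ('a \<Rightarrow> 'a) set" where
  "Homeo X = {f. homeomorphic_map X X f}"

definition clopen_in :: "'a topology \<Rightarrow> 'a set \<Rightarrow> bool" where
  "clopen_in X A \<longleftrightarrow> openin X A \<and> closedin X A"

definition Kset :: "'a topology \<Rightarrow> 'a set set" where
  "Kset X = {A. clopen_in X A \<and> A \<noteq> {} \<and> A \<noteq> topspace X}"

definition supp :: "('a \<Rightarrow> 'a) \<Rightarrow> 'a set" where
  "supp g = {p. g p \<noteq> p}"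

definition pstab :: "('a \<Rightarrow> 'a) set \<Rightarrow> 'a set \<Rightarrow> ('a \<Rightarrow> 'a) set" where
  "pstab G A = {g \<in> G. \<forall>p\<in>A. g p = p}"

definition vigorous :: "'a topology \<Rightarrow> ('a \<Rightarrow> 'a) set \<Rightarrow> bool" where
  "vigorous X S \<longleftrightarrow>
     (\<forall>A B C. clopen_in X A \<and> clopen_in X B \<and> clopen_in X C \<and>
        B \<noteq> {} \<and> C \<noteq> {} \<and> B \<subset> A \<and> C \<subset> A \<longrightarrow>
        (\<exists>g\<in>S. supp g \<subseteq> A \<and> g ` B \<subseteq> C))"

definition homeo_subgroup :: "'a topology \<Rightarrow> ('a \<Rightarrow> 'a) set \<Rightarrow> bool" where
  "homeo_subgroup X G \<longleftrightarrow> G \<subseteq> Homeo X \<and> id \<in> G \<and>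
     (\<forall>f\<in>G. \<forall>g\<in>G. f \<circ> g \<in> G) \<and> (\<forall>f\<in>G. inv f \<in> G)"

inductive_set gen_group :: "('a \<Rightarrow> 'a) set \<Rightarrow> ('a \<Rightarrow> 'a) set" for S where
  gen_id: "id \<in> gen_group S"
| gen_base: "f \<in> S \<Longrightarrow> f \<in> gen_group S"
| gen_comp: "f \<in> gen_group S \<Longrightarrow> g \<in> gen_group S \<Longrightarrow> f \<circ> g \<in> gen_group S"
| gen_inv: "f \<in> gen_group S \<Longrightarrow> inv f \<in> gen_group S"

definition small_support_gen :: "'a topology \<Rightarrow> ('a \<Rightarrow> 'a) set \<Rightarrow> bool" where
  "small_support_gen X G \<longleftrightarrow>
     G = gen_group {g \<in> G. \<exists>A\<in>Kset X. supp g \<subseteq> A}"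

end

theory Submission
  imports Defs
begin

lemma clopen_compl:
  assumes "topspace X = UNIV" "clopen_in X A" shows "clopen_in X (- A)"
proof -
  have "- A = topspace X - A" using assms(1) by auto
  thus ?thesis using assms(2) unfolding clopen_in_def
    by (metis closedin_diff openin_diff openin_topspace closedin_topspace)
qed

lemma clopen_Un: "clopen_in X A \<Longrightarrow> clopen_in X B \<Longrightarrow> clopen_in X (A \<union> B)"
  unfolding clopen_in_def by auto

lemma clopen_Int: "clopen_in X A \<Longrightarrow> clopen_in X B \<Longrightarrow> clopen_in X (A \<inter> B)"
  unfolding clopen_in_def by auto

lemma G_bij:
  assumes "topspace X = UNIV" "homeo_subgroup X G" "f \<in> G"
  shows "bij f"
proof -
  have "homeomorphic_map X X f" using assms unfolding homeo_subgroup_def Homeo_def by auto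
  then show ?thesis using assms(1) homeomorphic_imp_surjective_map homeomorphic_imp_injective_map
    by (metis bij_betw_def)
qed

lemma vig_use:
  assumes "vigorous X G" "clopen_in X A" "clopen_in X B" "clopen_in X C"
    "B \<noteq> {}" "C \<noteq> {}" "B \<subset> A" "C \<subset> A"
  shows "\<exists>g\<in>G. supp g \<subseteq> A \<and> g ` B \<subseteq> C"
  using assms unfolding vigorous_def by blast

lemma gen_sub:
  assumes "homeo_subgroup X G" "S \<subseteq> G"
  shows "gen_group S \<subseteq> G"
proof
  fix f assume "f \<in> gen_group S"
  then show "f \<in> G"
  proof induction
    case gen_id then show ?case using assms(1) unfolding homeo_subgroup_def by blast
  next
    case (gen_base f) then show ?case using assms(2) by blast
  next
    case (gen_comp f g) then show ?case using assms(1) unfolding homeo_subgroup_def by blast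
  next
    case (gen_inv f) then show ?case using assms(1) unfolding homeo_subgroup_def by blast
  qed
qed

lemma small_case:
  fixes X :: "'a topology" and G :: "('a \<Rightarrow> 'a) set" and B C D :: "'a set"
  assumes top: "topspace X = UNIV"
    and grp: "homeo_subgroup X G"
    and vig: "vigorous X G"
    and K: "B \<in> Kset X" "C \<in> Kset X" "D \<in> Kset X"
    and dj: "B \<inter> C = {}" "B \<inter> D = {}" "C \<inter> D = {}"
    and cov: "B \<union> C \<union> D = UNIV"
    and gG: "g \<in> G" and AK: "A \<in> Kset X" and sg: "supp g \<subseteq> A"
  shows "g \<in> gen_group (pstab G C \<union> pstab G D)"
proof -
  let ?H = "gen_group (pstab G C \<union> pstab G D)"
  have cB: "clopen_in X B" and cC: "clopen_in X C" and cD: "clopen_in X D" and cA: "clopen_in X A"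
    and nB: "B \<noteq> {}" and nC: "C \<noteq> {}" and nD: "D \<noteq> {}" and nA: "A \<noteq> UNIV"
    using K AK top unfolding Kset_def by auto
  have cAc: "clopen_in X (- A)" using clopen_compl[OF top cA] .
  have suppD: "h \<in> pstab G D" if "h \<in> G" "supp h \<subseteq> B \<union> C" for h
    using that dj cov unfolding pstab_def supp_def by auto
  have suppC: "h \<in> pstab G C" if "h \<in> G" "supp h \<subseteq> B \<union> D" for h
    using that dj cov unfolding pstab_def supp_def by auto
  have "\<exists>h\<in>?H. h ` C \<subseteq> - A"
  proof (cases "- A \<inter> (B \<union> C) = {}")
    case False
    show ?thesis
    proof (cases "- A \<inter> (B \<union> C) = B \<union> C")
      case True
      then have "id ` C \<subseteq> - A" by auto
      then show ?thesis using gen_id by blast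
    next
      case F2: False
      have c1: "clopen_in X (- A \<inter> (B \<union> C))" using cAc cB cC by (intro clopen_Int clopen_Un)
      have s1: "C \<subset> B \<union> C" using nB dj by auto
      have s2: "- A \<inter> (B \<union> C) \<subset> B \<union> C" using F2 by auto
      have n1: "- A \<inter> (B \<union> C) \<noteq> {}" using False .
      obtain h where h: "h \<in> G" "supp h \<subseteq> B \<union> C" "h ` C \<subseteq> - A \<inter> (B \<union> C)"
        using vig_use[OF vig clopen_Un[OF cB cC] cC c1 nC n1 s1 s2] by blast
      have "h \<in> pstab G D" using suppD h(1,2) .
      then have "h \<in> ?H" by (intro gen_base) simp
      moreover have "h ` C \<subseteq> - A" using h(3) by blast
      ultimately show ?thesis by blast
    qed
  next
    case True
    then have AD: "- A \<subseteq> D" using cov by auto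
    have nAc: "- A \<noteq> {}" using nA by auto
    have s1: "C \<subset> B \<union> C" and s2: "B \<subset> B \<union> C" using nB nC dj by auto
    obtain g1 where g1: "g1 \<in> G" "supp g1 \<subseteq> B \<union> C" "g1 ` C \<subseteq> B"
      using vig_use[OF vig clopen_Un[OF cB cC] cC cB nC nB s1 s2] by blast
    have s3: "B \<subset> B \<union> D" and s4: "- A \<subset> B \<union> D" using nB nD dj AD by auto
    obtain g2 where g2: "g2 \<in> G" "supp g2 \<subseteq> B \<union> D" "g2 ` B \<subseteq> - A"
      using vig_use[OF vig clopen_Un[OF cB cD] cB cAc nB nAc s3 s4] by blast
    have "g1 \<in> pstab G D" using suppD g1(1,2) .
    then have "g1 \<in> ?H" by (intro gen_base) simp
    moreover have "g2 \<in> pstab G C" using suppC g2(1,2) .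
    then have "g2 \<in> ?H" by (intro gen_base) simp
    ultimately have "g2 \<circ> g1 \<in> ?H" by (intro gen_comp)
    moreover have "(g2 \<circ> g1) ` C \<subseteq> - A" using g1(3) g2(3) by auto
    ultimately show ?thesis by blast
  qed
  then obtain h where hH: "h \<in> ?H" and hC: "h ` C \<subseteq> - A" by blast
  have HG: "?H \<subseteq> G" using gen_sub[OF grp] unfolding pstab_def by auto
  have hG: "h \<in> G" using hH HG by auto
  have bh: "bij h" using G_bij[OF top grp hG] .
  have ihG: "inv h \<in> G" using grp hG unfolding homeo_subgroup_def by auto
  define k where "k = inv h \<circ> g \<circ> h"
  have kG: "k \<in> G" using grp ihG gG hG unfolding k_def homeo_subgroup_def by auto
  have "\<forall>p\<in>C. k p = p"
  proof
    fix p assume "p \<in> C"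
    then have "h p \<notin> A" using hC by auto
    then have "g (h p) = h p" using sg unfolding supp_def by auto
    then show "k p = p" unfolding k_def using bh by (simp add: bij_is_inj)
  qed
  then have "k \<in> pstab G C" using kG unfolding pstab_def by auto
  then have kH: "k \<in> ?H" using gen_base by blast
  have "h \<circ> k \<circ> inv h = g"
    unfolding k_def using bh
    by (simp add: fun_eq_iff bij_is_surj surj_f_inv_f)
  moreover have "h \<circ> k \<circ> inv h \<in> ?H" using hH kH gen_comp gen_inv by blast
  ultimately show ?thesis by simp
qed

theorem lemma2p8:
  fixes X :: "'a topology" and G :: "('a \<Rightarrow> 'a) set" and B C D :: "'a set"
  assumes "topspace X = UNIV"
    and "X homeomorphic_space cantor_top"
    and "homeo_subgroup X G"
    and "vigorous X G"
    and "small_support_gen X G"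
    and "B \<in> Kset X" and "C \<in> Kset X" and "D \<in> Kset X"
    and "B \<inter> C = {}" and "B \<inter> D = {}" and "C \<inter> D = {}"
    and "B \<union> C \<union> D = UNIV"
  shows "G = gen_group (pstab G C \<union> pstab G D)"
proof
  show "gen_group (pstab G C \<union> pstab G D) \<subseteq> G"
    using gen_sub[OF assms(3)] unfolding pstab_def by auto
  let ?S = "{g \<in> G. \<exists>A\<in>Kset X. supp g \<subseteq> A}"
  have "gen_group ?S \<subseteq> gen_group (pstab G C \<union> pstab G D)"
  proof
    fix f assume "f \<in> gen_group ?S"
    then show "f \<in> gen_group (pstab G C \<union> pstab G D)"
    proof induction
      case gen_id then show ?case by (rule gen_group.gen_id)
    next
      case (gen_base f)
      then show ?case using small_case[OF assms(1,3,4,6-12)] by blast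
    next
      case (gen_comp f g) then show ?case by (blast intro: gen_group.gen_comp)
    next
      case (gen_inv f) then show ?case by (blast intro: gen_group.gen_inv)
    qed
  qed
  then show "G \<subseteq> gen_group (pstab G C \<union> pstab G D)"
    using assms(5) unfolding small_support_gen_def by simp
qed

end
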